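(* Let $m$ be a positive integer, $q>1$ real, $\kappa\in\mathbb{C}$ with $\kappa\notin\frac{2\pi i}{\log q}\mathbb{Z}$, $c\in\mathbb{C}$, and let $\Psi_0,\dots,\Psi_{m-1}$ and $\Xi_0,\dots,\Xi_{m-1}$ be $1$-periodic continuous functions such that $$\sum_{0\le k<m}(\log_qN)^k\Psi_k(\log_qN)=\sum_{0\le k<m}(\log_qN)^k\Xi_k(\log_qN)+cN^{-\kappa}+o(1)$$ for integers $N\to\infty$. Then $\Psi_k=\Xi_k$ for $0\le k<m$. *)

theory Defs
  imports "HOL-Analysis.Analysis"
begin

end

theory Submission
  imports Defs
begin

lemma periodic_nat:
  assumes "\<forall>x. g (x + 1) = (g x :: 'a)"
  shows "g (x + real n) = g x"
proof (induction n)
  case (Suc n)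
  have "x + real (Suc n) = (x + real n) + 1" by simp
  then show ?case using assms Suc by metis
qed simp

lemma geo:
  fixes u r :: "nat \<Rightarrow> complex"
  assumes u: "u \<longlonglongrightarrow> L" and r: "r \<longlonglongrightarrow> w" and w: "w \<noteq> 1"
    and ev: "eventually (\<lambda>j. u (Suc j) = r j * u j) sequentially"
  shows "L = 0"
proof -
  have a: "(\<lambda>j. u (Suc j)) \<longlonglongrightarrow> L" using LIMSEQ_Suc[OF u] .
  have "(\<lambda>j. r j * u j) \<longlonglongrightarrow> w * L" using tendsto_mult[OF r u] .
  moreover have "((\<lambda>j. r j * u j) \<longlongrightarrow> w * L) sequentially = ((\<lambda>j. u (Suc j)) \<longlongrightarrow> w * L) sequentially"
    by (rule tendsto_cong) (use ev in \<open>auto elim: eventually_mono\<close>)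
  ultimately have "(\<lambda>j. u (Suc j)) \<longlonglongrightarrow> w * L" by simp
  then have "L = w * L" using a LIMSEQ_unique by blast
  then have "(1 - w) * L = 0" by (simp add: algebra_simps)
  then show ?thesis using w by simp
qed

lemma floor_ln: "((\<lambda>z::real. ln (real_of_int \<lfloor>z\<rfloor>) - ln z) \<longlongrightarrow> 0) at_top"
proof -
  have r: "((\<lambda>z::real. real_of_int \<lfloor>z\<rfloor> / z) \<longlongrightarrow> 1) at_top"
  proof (rule tendsto_sandwich[where f="\<lambda>z. 1 - 1/z" and h="\<lambda>z. 1"])
    show "eventually (\<lambda>z. 1 - 1/z \<le> real_of_int \<lfloor>z\<rfloor> / z) at_top"
      using eventually_gt_at_top[of 0]
    proof eventually_elim
      case (elim z)
      have "z - 1 \<le> real_of_int \<lfloor>z\<rfloor>" by linarith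
      then have "(z - 1) / z \<le> real_of_int \<lfloor>z\<rfloor> / z" using elim by (simp add: divide_right_mono)
      moreover have "1 - 1/z = (z - 1) / z" using elim by (simp add: field_simps)
      ultimately show ?case by simp
    qed
    show "eventually (\<lambda>z. real_of_int \<lfloor>z\<rfloor> / z \<le> 1) at_top"
      using eventually_gt_at_top[of 0]
    proof eventually_elim
      case (elim z)
      have "real_of_int \<lfloor>z\<rfloor> \<le> z" by linarith
      then have "real_of_int \<lfloor>z\<rfloor> / z \<le> z / z" using elim by (simp add: divide_right_mono)
      then show ?case using elim by simp
    qed
    have "((\<lambda>z::real. 1 - inverse z) \<longlongrightarrow> 1 - 0) at_top"
      by (intro tendsto_intros tendsto_inverse_0_at_top filterlim_ident)
    then show "((\<lambda>z::real. 1 - 1/z) \<longlongrightarrow> 1) at_top" by (simp add: inverse_eq_divide)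
  qed simp
  have "((\<lambda>z::real. ln (real_of_int \<lfloor>z\<rfloor> / z)) \<longlongrightarrow> ln 1) at_top"
    by (rule tendsto_ln[OF r]) simp
  then have "((\<lambda>z::real. ln (real_of_int \<lfloor>z\<rfloor> / z)) \<longlongrightarrow> 0) at_top" by simp
  moreover have "((\<lambda>z::real. ln (real_of_int \<lfloor>z\<rfloor> / z)) \<longlongrightarrow> 0) at_top = ((\<lambda>z::real. ln (real_of_int \<lfloor>z\<rfloor>) - ln z) \<longlongrightarrow> 0) at_top"
  proof (rule tendsto_cong)
    show "eventually (\<lambda>z::real. ln (real_of_int \<lfloor>z\<rfloor> / z) = ln (real_of_int \<lfloor>z\<rfloor>) - ln z) at_top"
      using eventually_ge_at_top[of "1::real"]
    proof eventually_elim
      case (elim z)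
      then have "1 \<le> \<lfloor>z\<rfloor>" by (simp add: le_floor_iff)
      then have p: "real_of_int \<lfloor>z\<rfloor> > 0" by simp
      have "z > 0" using elim by simp
      moreover have "\<lfloor>z\<rfloor> \<noteq> 0" using p by linarith
      ultimately show ?case by (simp add: ln_div)
    qed
  qed
  ultimately show ?thesis by simp
qed

lemma sample:
  fixes q y :: real assumes q: "q > 1"
  shows "filterlim (\<lambda>j. nat \<lfloor>q powr (real j + y)\<rfloor>) at_top sequentially"
    and "(\<lambda>j. log q (real (nat \<lfloor>q powr (real j + y)\<rfloor>)) - real j) \<longlonglongrightarrow> y"
proof -
  define z where "z j = q powr (real j + y)" for j :: nat
  have lz: "ln (z j) = (real j + y) * ln q" for j using q by (simp add: z_def ln_powr)
  have zt: "filterlim z at_top sequentially"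
  proof -
    have "filterlim (\<lambda>j. y + real j) at_top sequentially"
      by (rule filterlim_tendsto_add_at_top[OF tendsto_const filterlim_real_sequentially])
    then have "filterlim (\<lambda>j. ln q * (y + real j)) at_top sequentially"
      using q by (intro filterlim_tendsto_pos_mult_at_top tendsto_const) auto
    then have "filterlim (\<lambda>j. (real j + y) * ln q) at_top sequentially"
      by (simp add: algebra_simps)
    then have "filterlim (\<lambda>j. exp ((real j + y) * ln q)) at_top sequentially"
      using exp_at_top filterlim_compose by blast
    moreover have "exp ((real j + y) * ln q) = z j" for j
      using q by (simp add: z_def powr_def)
    ultimately show ?thesis by simp
  qed
  show "filterlim (\<lambda>j. nat \<lfloor>q powr (real j + y)\<rfloor>) at_top sequentially"
    unfolding filterlim_at_top
  proof
    fix Z :: nat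
    have "eventually (\<lambda>j. real Z + 1 \<le> z j) sequentially"
      using zt by (simp add: filterlim_at_top)
    then show "eventually (\<lambda>j. Z \<le> nat \<lfloor>q powr (real j + y)\<rfloor>) sequentially"
      by (rule eventually_mono) (simp add: z_def le_nat_iff le_floor_iff)
  qed
  have fl: "(\<lambda>j. ln (real_of_int \<lfloor>z j\<rfloor>) - ln (z j)) \<longlonglongrightarrow> 0"
    using filterlim_compose[OF floor_ln zt] by simp
  have "(\<lambda>j. (ln (real_of_int \<lfloor>z j\<rfloor>) - ln (z j)) / ln q + y) \<longlonglongrightarrow> 0 / ln q + y"
    using q by (intro tendsto_intros fl) simp
  moreover have "(ln (real_of_int \<lfloor>z j\<rfloor>) - ln (z j)) / ln q + y
      = log q (real (nat \<lfloor>q powr (real j + y)\<rfloor>)) - real j" for j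
  proof -
    have "z j \<ge> 0" by (simp add: z_def)
    then have "real (nat \<lfloor>z j\<rfloor>) = real_of_int \<lfloor>z j\<rfloor>" by simp
    moreover have "ln q > 0" using q by simp
    ultimately show ?thesis using q lz[of j] by (simp add: log_def z_def field_simps)
  qed
  ultimately show "(\<lambda>j. log q (real (nat \<lfloor>q powr (real j + y)\<rfloor>)) - real j) \<longlonglongrightarrow> y" by simp
qed


lemma top_zero:
  fixes d :: "nat \<Rightarrow> real \<Rightarrow> complex" and q y :: real and \<kappa> c :: complex
  assumes q: "q > 1"
    and kap: "\<forall>j::int. \<kappa> \<noteq> 2 * of_real pi * \<i> * of_int j / of_real (ln q)"
    and per: "\<forall>k\<le>n. \<forall>x. d k (x + 1) = d k x"
    and cont: "\<forall>k\<le>n. continuous_on UNIV (d k)"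
    and hyp: "(\<lambda>N::nat. (\<Sum>k\<le>n. of_real (log q (real N)) ^ k * d k (log q (real N)))
          - c * of_nat N powr (- \<kappa>)) \<longlonglongrightarrow> 0"
  shows "d n y = 0"
proof -
  define F where "F N = (\<Sum>k\<le>n. of_real (log q (real N)) ^ k * d k (log q (real N)))
          - c * of_nat N powr (- \<kappa>)" for N :: nat
  define N where "N j = nat \<lfloor>q powr (real j + y)\<rfloor>" for j :: nat
  define X where "X j = log q (real (N j))" for j
  have lq: "ln q > 0" using q by simp
  have NT: "filterlim N at_top sequentially" unfolding N_def using sample(1)[OF q] .
  have XY: "(\<lambda>j. X j - real j) \<longlonglongrightarrow> y" unfolding X_def N_def using sample(2)[OF q] .
  have Xtop: "filterlim X at_top sequentially"
  proof -
    have "filterlim (\<lambda>j. (X j - real j) + real j) at_top sequentially"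
      by (rule filterlim_tendsto_add_at_top[OF XY filterlim_real_sequentially])
    then show ?thesis by simp
  qed
  have evX: "eventually (\<lambda>j. X j > 0) sequentially"
    using Xtop by (simp add: filterlim_at_top_dense)
  have evN: "eventually (\<lambda>j. N j > 0) sequentially"
  proof -
    have "eventually (\<lambda>j. 1 \<le> N j) sequentially" using NT by (simp add: filterlim_at_top)
    then show ?thesis by (rule eventually_mono) simp
  qed
  have gk: "(\<lambda>j. d k (X j)) \<longlonglongrightarrow> d k y" if "k \<le> n" for k
  proof -
    have ic: "isCont (d k) y" using cont that by (simp add: continuous_on_eq_continuous_at)
    have "(\<lambda>j. d k (X j - real j)) \<longlonglongrightarrow> d k y"
      by (rule isCont_tendsto_compose[OF ic XY])
    moreover have "d k (X j - real j) = d k (X j)" for j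
      using periodic_nat[of "d k" "X j - real j" j] per that by simp
    ultimately show ?thesis by simp
  qed
  have evXS: "eventually (\<lambda>j. X (Suc j) > 0) sequentially" using evX eventually_sequentially_Suc[of "\<lambda>j. X j > 0"] by blast
  have evNS: "eventually (\<lambda>j. N (Suc j) > 0) sequentially" using evN eventually_sequentially_Suc[of "\<lambda>j. N j > 0"] by blast
  define iv where "iv j = inverse (complex_of_real (X j))" for j
  have ivz: "iv \<longlonglongrightarrow> 0"
  proof -
    have "(\<lambda>j. inverse (X j)) \<longlonglongrightarrow> 0" by (rule tendsto_inverse_0_at_top[OF Xtop])
    then have "(\<lambda>j. complex_of_real (inverse (X j))) \<longlonglongrightarrow> of_real 0" by (rule tendsto_of_real)
    then show ?thesis by (simp add: iv_def[abs_def] of_real_inverse)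
  qed
  have h1: "(\<lambda>j. F (N j)) \<longlonglongrightarrow> 0"
    using filterlim_compose[OF hyp[folded F_def] NT] .
  have h2: "(\<lambda>j. F (N j) * iv j ^ n) \<longlonglongrightarrow> 0"
    using tendsto_mult[OF h1 tendsto_power[OF ivz, of n]] by simp
  have h3: "(\<lambda>j. of_real (X j) ^ k * d k (X j) * iv j ^ n) \<longlonglongrightarrow> 0" if "k < n" for k
  proof -
    have "(\<lambda>j. iv j ^ (n - k) * d k (X j)) \<longlonglongrightarrow> 0 ^ (n - k) * d k y"
      using that by (intro tendsto_intros ivz gk) simp
    then have a: "(\<lambda>j. iv j ^ (n - k) * d k (X j)) \<longlonglongrightarrow> 0" using that by (simp add: power_0_left)
    have "eventually (\<lambda>j. iv j ^ (n - k) * d k (X j) = of_real (X j) ^ k * d k (X j) * iv j ^ n) sequentially"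
      using evX
    proof eventually_elim
      case (elim j)
      have "iv j ^ n = iv j ^ (n - k) * iv j ^ k" using that by (simp add: power_add[symmetric])
      moreover have "of_real (X j) ^ k * iv j ^ k = 1" using elim
        by (simp add: iv_def power_mult_distrib[symmetric])
      ultimately show ?case by (simp add: algebra_simps)
    qed
    then show ?thesis using a by (rule Lim_transform_eventually[rotated])
  qed
  have h4: "(\<lambda>j. \<Sum>k<n. of_real (X j) ^ k * d k (X j) * iv j ^ n) \<longlonglongrightarrow> 0"
    by (rule tendsto_null_sum) (use h3 in auto)
  define u where "u j = c * of_nat (N j) powr (- \<kappa>) * iv j ^ n" for j
  have uL: "u \<longlonglongrightarrow> d n y + 0 - 0"
  proof -
    have "(\<lambda>j. d n (X j) + (\<Sum>k<n. of_real (X j) ^ k * d k (X j) * iv j ^ n) - F (N j) * iv j ^ n)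
       \<longlonglongrightarrow> d n y + 0 - 0"
      by (intro tendsto_intros gk h4 h2) simp
    moreover have "eventually (\<lambda>j. d n (X j) + (\<Sum>k<n. of_real (X j) ^ k * d k (X j) * iv j ^ n) - F (N j) * iv j ^ n = u j) sequentially"
      using evX
    proof eventually_elim
      case (elim j)
      have xi: "of_real (X j) ^ n * iv j ^ n = 1" using elim
        by (simp add: iv_def power_mult_distrib[symmetric])
      have "F (N j) = (\<Sum>k<n. of_real (X j) ^ k * d k (X j)) + of_real (X j) ^ n * d n (X j)
          - c * of_nat (N j) powr (- \<kappa>)"
        unfolding F_def X_def by (simp add: lessThan_Suc_atMost[symmetric])
      then have "F (N j) * iv j ^ n = ((\<Sum>k<n. of_real (X j) ^ k * d k (X j)) + of_real (X j) ^ n * d n (X j)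
          - c * of_nat (N j) powr (- \<kappa>)) * iv j ^ n" by simp
      also have "\<dots> = (\<Sum>k<n. of_real (X j) ^ k * d k (X j) * iv j ^ n)
          + (of_real (X j) ^ n * iv j ^ n) * d n (X j) - u j"
        by (simp add: u_def ring_distribs sum_distrib_right sum_distrib_left mult_ac)
      finally have "F (N j) * iv j ^ n = (\<Sum>k<n. of_real (X j) ^ k * d k (X j) * iv j ^ n)
          + (of_real (X j) ^ n * iv j ^ n) * d n (X j) - u j" .
      then show ?case using xi by simp
    qed
    ultimately show ?thesis by (rule Lim_transform_eventually)
  qed
  define w where "w = exp (- \<kappa> * of_real (ln q))"
  define r where "r j = exp (- \<kappa> * of_real (ln q * (X (Suc j) - X j))) * (of_real (X j) * iv (Suc j)) ^ n" for j
  have D: "(\<lambda>j. X (Suc j) - X j) \<longlonglongrightarrow> 1"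
  proof -
    have "(\<lambda>j. 1 + ((X (Suc j) - real (Suc j)) - (X j - real j))) \<longlonglongrightarrow> 1 + (y - y)"
      by (intro tendsto_intros LIMSEQ_Suc[OF XY] XY)
    then show ?thesis by (simp add: algebra_simps)
  qed
  have rw: "r \<longlonglongrightarrow> w"
  proof -
    have e: "(\<lambda>j. exp (- \<kappa> * of_real (ln q * (X (Suc j) - X j)))) \<longlonglongrightarrow> exp (- \<kappa> * of_real (ln q * 1))"
      by (intro tendsto_intros D)
    have "(\<lambda>j. 1 - (X (Suc j) - X j) / X (Suc j)) \<longlonglongrightarrow> 1 - 0"
      by (intro tendsto_intros tendsto_divide_0[OF D] filterlim_at_top_imp_at_infinity
          filterlim_compose[OF Xtop filterlim_Suc])
    then have "(\<lambda>j. complex_of_real (1 - (X (Suc j) - X j) / X (Suc j))) \<longlonglongrightarrow> of_real (1 - 0)"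
      by (rule tendsto_of_real)
    moreover have "eventually (\<lambda>j. complex_of_real (1 - (X (Suc j) - X j) / X (Suc j)) = of_real (X j) * iv (Suc j)) sequentially"
      using evXS
    proof eventually_elim
      case (elim j)
      then show ?case by (simp add: iv_def field_simps)
    qed
    ultimately have "(\<lambda>j. of_real (X j) * iv (Suc j)) \<longlonglongrightarrow> 1"
      by (simp add: Lim_transform_eventually)
    then have "(\<lambda>j. (of_real (X j) * iv (Suc j)) ^ n) \<longlonglongrightarrow> 1 ^ n" by (rule tendsto_power)
    from tendsto_mult[OF e this] show ?thesis by (simp add: r_def[abs_def] w_def)
  qed
  have w1: "w \<noteq> 1"
  proof
    assume "w = 1"
    then obtain k :: int where re: "Re (- \<kappa> * of_real (ln q)) = 0"
        and im: "Im (- \<kappa> * of_real (ln q)) = of_int (2 * k) * pi"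
      unfolding w_def exp_eq_1 by blast
    have "\<kappa> = 2 * of_real pi * \<i> * of_int (- k) / of_real (ln q)"
      using re im lq by (simp add: complex_eq_iff field_simps)
    then show False using kap by blast
  qed
  have ev: "eventually (\<lambda>j. u (Suc j) = r j * u j) sequentially"
    using evX evN evXS evNS
  proof eventually_elim
    case (elim j)
    have pw: "of_nat (N i) powr (- \<kappa>) = exp (- \<kappa> * of_real (ln q * X i))" if "N i > 0" for i
    proof -
      have "ln (real (N i)) = ln q * X i" using lq that by (simp add: X_def log_def)
      then show ?thesis using that by (simp add: powr_def)
    qed
    have ex: "exp (- \<kappa> * of_real (ln q * X (Suc j))) =
        exp (- \<kappa> * of_real (ln q * (X (Suc j) - X j))) * exp (- \<kappa> * of_real (ln q * X j))"
      by (simp add: exp_add[symmetric] algebra_simps)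
    have xi: "of_real (X j) * iv j = 1" using elim by (simp add: iv_def)
    have idt: "iv (Suc j) ^ n = (of_real (X j) * iv (Suc j)) ^ n * iv j ^ n"
      using xi by (metis mult.commute mult.left_commute mult_1_right power_mult_distrib)
    have "u (Suc j) = c * (exp (- \<kappa> * of_real (ln q * (X (Suc j) - X j))) * exp (- \<kappa> * of_real (ln q * X j)))
        * ((of_real (X j) * iv (Suc j)) ^ n * iv j ^ n)"
      unfolding u_def pw[OF elim(4)] ex idt ..
    also have "\<dots> = r j * u j"
      unfolding r_def u_def pw[OF elim(2)] by (simp only: mult_ac)
    finally show ?case .
  qed
  have "d n y + 0 - 0 = 0" by (rule geo[OF uL rw w1 ev])
  then show ?thesis by simp
qed


lemma all_zero:
  fixes d :: "nat \<Rightarrow> real \<Rightarrow> complex" and q :: real and \<kappa> c :: complex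
  assumes q: "q > 1"
    and kap: "\<forall>j::int. \<kappa> \<noteq> 2 * of_real pi * \<i> * of_int j / of_real (ln q)"
  shows "(\<forall>k<m. \<forall>x. d k (x + 1) = d k x) \<Longrightarrow> (\<forall>k<m. continuous_on UNIV (d k)) \<Longrightarrow>
    (\<lambda>N::nat. (\<Sum>k<m. of_real (log q (real N)) ^ k * d k (log q (real N)))
          - c * of_nat N powr (- \<kappa>)) \<longlonglongrightarrow> 0 \<Longrightarrow> \<forall>k<m. d k = (\<lambda>_. 0)"
proof (induction m)
  case 0
  then show ?case by simp
next
  case (Suc n)
  have hyp: "(\<lambda>N::nat. (\<Sum>k\<le>n. of_real (log q (real N)) ^ k * d k (log q (real N)))
          - c * of_nat N powr (- \<kappa>)) \<longlonglongrightarrow> 0"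
    using Suc.prems(3) by (simp add: lessThan_Suc_atMost)
  have dn: "d n = (\<lambda>_. 0)"
  proof
    fix y
    show "d n y = 0"
    proof (rule top_zero[OF q kap _ _ hyp])
      show "\<forall>k\<le>n. \<forall>x. d k (x + 1) = d k x" using Suc.prems(1) by (simp add: less_Suc_eq_le)
      show "\<forall>k\<le>n. continuous_on UNIV (d k)" using Suc.prems(2) by (simp add: less_Suc_eq_le)
    qed
  qed
  have "(\<lambda>N::nat. (\<Sum>k<n. of_real (log q (real N)) ^ k * d k (log q (real N)))
          - c * of_nat N powr (- \<kappa>)) \<longlonglongrightarrow> 0"
    using Suc.prems(3) dn by simp
  moreover have "\<forall>k<n. \<forall>x. d k (x + 1) = d k x" "\<forall>k<n. continuous_on UNIV (d k)"
    using Suc.prems(1,2) by simp_all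
  ultimately have "\<forall>k<n. d k = (\<lambda>_. 0)" using Suc.IH by blast
  then show ?case using dn less_Suc_eq by auto
qed

theorem lemmaF2:
  fixes m :: nat and q :: real and \<kappa> c :: complex
    and \<Psi> \<Xi> :: "nat \<Rightarrow> real \<Rightarrow> complex"
  assumes "m > 0" and "q > 1"
    and "\<forall>j::int. \<kappa> \<noteq> 2 * of_real pi * \<i> * of_int j / of_real (ln q)"
    and "\<forall>k<m. \<forall>x. \<Psi> k (x + 1) = \<Psi> k x"
    and "\<forall>k<m. \<forall>x. \<Xi> k (x + 1) = \<Xi> k x"
    and "\<forall>k<m. continuous_on UNIV (\<Psi> k)"
    and "\<forall>k<m. continuous_on UNIV (\<Xi> k)"
    and "(\<lambda>N::nat. (\<Sum>k<m. of_real (log q (real N)) ^ k * \<Psi> k (log q (real N)))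
          - (\<Sum>k<m. of_real (log q (real N)) ^ k * \<Xi> k (log q (real N)))
          - c * of_nat N powr (- \<kappa>)) \<longlonglongrightarrow> 0"
  shows "\<forall>k<m. \<Psi> k = \<Xi> k"
proof -
  define d where "d k x = \<Psi> k x - \<Xi> k x" for k x
  have per: "\<forall>k<m. \<forall>x. d k (x + 1) = d k x" using assms(4,5) by (simp add: d_def)
  have cont: "\<forall>k<m. continuous_on UNIV (d k)"
    using assms(6,7) by (auto simp: d_def[abs_def] intro: continuous_on_diff)
  have "(\<Sum>k<m. of_real (log q (real N)) ^ k * \<Psi> k (log q (real N)))
          - (\<Sum>k<m. of_real (log q (real N)) ^ k * \<Xi> k (log q (real N)))
        = (\<Sum>k<m. of_real (log q (real N)) ^ k * d k (log q (real N)))" for N :: nat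
    by (simp add: d_def sum_subtractf[symmetric] right_diff_distrib)
  then have hyp: "(\<lambda>N::nat. (\<Sum>k<m. of_real (log q (real N)) ^ k * d k (log q (real N)))
          - c * of_nat N powr (- \<kappa>)) \<longlonglongrightarrow> 0" using assms(8) by simp
  have "\<forall>k<m. d k = (\<lambda>_. 0)" by (rule all_zero[OF assms(2,3) per cont hyp])
  then show ?thesis by (auto simp: d_def fun_eq_iff)
qed

end
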